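(* Let $\rho_1,\rho_2$ be two-qubit states and let $\rho'=(I_2\otimes\Lambda^{\mathrm{tel}}_{\rho_2})(\rho_1)$ be the end-to-end state of a non-postselected entanglement swap (the second qubit of $\rho_1$ is teleported using $\rho_2$ as resource). Then $\mathcal B(\rho')=\rho'_{\mathcal B}$, where $\rho'_{\mathcal B}=\sum_k\lambda'_k|\Psi_{(k)}\rangle\langle\Psi_{(k)}|$ is the Bell-diagonal state with $\lambda_0'=\lambda_0\mu_0+\lambda_1\mu_1+\lambda_2\mu_2+\lambda_3\mu_3$, $\lambda_1'=\lambda_0\mu_1+\lambda_1\mu_0+\lambda_2\mu_3+\lambda_3\mu_2$, $\lambda_2'=\lambda_0\mu_2+\lambda_2\mu_0+\lambda_3\mu_1+\lambda_1\mu_3$, $\lambda_3'=\lambda_0\mu_3+\lambda_3\mu_0+\lambda_1\mu_2+\lambda_2\mu_1$, with $(\lambda_0,\dots,\lambda_3)$ and $(\mu_0,\dots,\mu_3)$ the Bell-diagonal elements $\langle\Psi_{(k)}|\rho_1|\Psi_{(k)}\rangle$ and $\langle\Psi_{(k)}|\rho_2|\Psi_{(k)}\rangle$.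
   Context: Bell states: for qubit registers $(R,T)$, $|\Psi_{mn}\rangle_{RT}=(I_R\otimes(X^mZ^n)_T)\tfrac1{\sqrt2}(|00\rangle+|11\rangle)$; $(|\Psi_{(0)}\rangle,\dots,|\Psi_{(3)}\rangle)=(|\Psi_{00}\rangle,|\Psi_{01}\rangle,|\Psi_{10}\rangle,|\Psi_{11}\rangle)$. Bell-diagonal twirl $\mathcal B(\rho)=\tfrac14\sum_{P\in\{I,X,Y,Z\}}(P\otimes P)\rho(P\otimes P)^\dagger=\sum_k\langle\Psi_{(k)}|\rho|\Psi_{(k)}\rangle|\Psi_{(k)}\rangle\langle\Psi_{(k)}|$. Teleportation channel with resource $\rho$ on $AB$, input on $C$: $\Lambda^{\mathrm{tel}}_\rho(\sigma)=\sum_{i,j}(Z^jX^i)_B\langle\Psi_{ij}|_{CA}(\sigma_C\otimes\rho_{AB})|\Psi_{ij}\rangle_{CA}(Z^jX^i)_B^\dagger$; in $(I_2\otimes\Lambda^{\mathrm{tel}}_{\rho_2})(\rho_1)$ it acts (linearly) on the second qubit of $\rho_1$. *)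

theory Defs
  imports "Jordan_Normal_Form.Matrix"
begin

text \<open>Kronecker (tensor) product; the first factor is the most significant index,
  so the two-qubit basis state |ab> has index 2a+b.\<close>
definition tensor_mat :: "complex mat \<Rightarrow> complex mat \<Rightarrow> complex mat" (infixr \<open>\<otimes>\<^sub>k\<close> 71) where
  "A \<otimes>\<^sub>k B = mat (dim_row A * dim_row B) (dim_col A * dim_col B)
     (\<lambda>(i, j). A $$ (i div dim_row B, j div dim_col B) * B $$ (i mod dim_row B, j mod dim_col B))"

definition adj :: "complex mat \<Rightarrow> complex mat" where
  "adj A = mat (dim_col A) (dim_row A) (\<lambda>(i, j). cnj (A $$ (j, i)))"

definition mat_trace :: "complex mat \<Rightarrow> complex" where
  "mat_trace A = (\<Sum>i<dim_row A. A $$ (i, i))"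

definition density_mat :: "nat \<Rightarrow> complex mat \<Rightarrow> bool" where
  "density_mat n \<rho> \<longleftrightarrow> \<rho> \<in> carrier_mat n n \<and>
     (\<forall>v \<in> carrier_vec n. let q = conjugate v \<bullet> (\<rho> *\<^sub>v v) in Im q = 0 \<and> Re q \<ge> 0) \<and>
     mat_trace \<rho> = 1"

definition pauliI :: "complex mat" where "pauliI = 1\<^sub>m 2"
definition pauliX :: "complex mat" where
  "pauliX = mat 2 2 (\<lambda>(i, j). if i \<noteq> j then 1 else 0)"
definition pauliZ :: "complex mat" where
  "pauliZ = mat 2 2 (\<lambda>(i, j). if i = j then (if i = 0 then 1 else -1) else 0)"
definition pauliY :: "complex mat" where
  "pauliY = mat 2 2 (\<lambda>(i, j). if i = 0 \<and> j = 1 then -\<i> else if i = 1 \<and> j = 0 then \<i> else 0)"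

definition ketbra :: "nat \<Rightarrow> nat \<Rightarrow> complex mat" where
  "ketbra a b = mat 2 2 (\<lambda>(i, j). if i = a \<and> j = b then 1 else 0)"

definition phi_plus :: "complex mat" where
  "phi_plus = mat 4 1 (\<lambda>(i, j). if i = 0 \<or> i = 3 then 1 / complex_of_real (sqrt 2) else 0)"

definition bell :: "nat \<Rightarrow> nat \<Rightarrow> complex mat" where
  "bell m n = (pauliI \<otimes>\<^sub>k (pauliX ^\<^sub>m m * pauliZ ^\<^sub>m n)) * phi_plus"

definition bellk :: "nat \<Rightarrow> complex mat" where
  "bellk k = bell (k div 2) (k mod 2)"

definition bell_proj :: "nat \<Rightarrow> complex mat" where
  "bell_proj k = bellk k * adj (bellk k)"

definition bell_coeff :: "complex mat \<Rightarrow> nat \<Rightarrow> complex" where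
  "bell_coeff \<rho> k = (adj (bellk k) * \<rho> * bellk k) $$ (0, 0)"

definition pauli_conj2 :: "complex mat \<Rightarrow> complex mat \<Rightarrow> complex mat" where
  "pauli_conj2 P \<rho> = (P \<otimes>\<^sub>k P) * \<rho> * adj (P \<otimes>\<^sub>k P)"

definition bell_twirl :: "complex mat \<Rightarrow> complex mat" where
  "bell_twirl \<rho> = (1/4 :: complex) \<cdot>\<^sub>m
     (pauli_conj2 pauliI \<rho> + pauli_conj2 pauliX \<rho> + pauli_conj2 pauliY \<rho> + pauli_conj2 pauliZ \<rho>)"

text \<open>One term of the teleportation channel: registers ordered C, A, B;
  (Z^j X^i)_B <Psi_ij|_CA (sigma_C \<otimes> rho_AB) |Psi_ij>_CA (Z^j X^i)_B^dagger.\<close>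
definition tel_term :: "complex mat \<Rightarrow> complex mat \<Rightarrow> nat \<Rightarrow> nat \<Rightarrow> complex mat" where
  "tel_term \<rho> \<sigma> i j =
     (let U = pauliZ ^\<^sub>m j * pauliX ^\<^sub>m i;
          K = adj (bell i j) \<otimes>\<^sub>k pauliI
      in U * (K * (\<sigma> \<otimes>\<^sub>k \<rho>) * adj K) * adj U)"

definition teleport :: "complex mat \<Rightarrow> complex mat \<Rightarrow> complex mat" where
  "teleport \<rho> \<sigma> = tel_term \<rho> \<sigma> 0 0 + tel_term \<rho> \<sigma> 0 1 + tel_term \<rho> \<sigma> 1 0 + tel_term \<rho> \<sigma> 1 1"

definition id_tensor_channel :: "(complex mat \<Rightarrow> complex mat) \<Rightarrow> complex mat \<Rightarrow> complex mat" where
  "id_tensor_channel \<Lambda> \<rho> = mat 4 4 (\<lambda>(r, s).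
     \<Sum>a<2. \<Sum>b<2. \<Sum>c<2. \<Sum>d<2.
       \<rho> $$ (2*a + c, 2*b + d) * (ketbra a b \<otimes>\<^sub>k \<Lambda> (ketbra c d)) $$ (r, s))"

definition swap_state :: "complex mat \<Rightarrow> complex mat \<Rightarrow> complex mat" where
  "swap_state \<rho>1 \<rho>2 = id_tensor_channel (teleport \<rho>2) \<rho>1"

end

theory Submission
  imports Defs
begin

lemma less4: "(i::nat) < 4 \<longleftrightarrow> i = 0 \<or> i = 1 \<or> i = 2 \<or> i = 3" by auto
lemma less2: "(i::nat) < 2 \<longleftrightarrow> i = 0 \<or> i = 1" by auto
lemma sum_lt2: "(\<Sum>k<2. f k) = f 0 + f (1::nat)" by (simp add: eval_nat_numeral)
lemma sum_lt4: "(\<Sum>k<4. f k) = f 0 + f 1 + f 2 + f (3::nat)" by (simp add: eval_nat_numeral)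
lemma sum_lt8: "(\<Sum>k<8. f k) = f 0 + f 1 + f 2 + f 3 + f 4 + f 5 + f 6 + f (7::nat)" by (simp add: eval_nat_numeral)

lemma idx_mult: "dim_col A = dim_row B \<Longrightarrow> i < dim_row A \<Longrightarrow> j < dim_col B \<Longrightarrow> (A * B) $$ (i,j) = (\<Sum>k<dim_row B. A $$ (i,k) * B $$ (k,j))"
  by (simp add: scalar_prod_def atLeast0LessThan)
lemma dim_tensor[simp]: "dim_row (A \<otimes>\<^sub>k B) = dim_row A * dim_row B" "dim_col (A \<otimes>\<^sub>k B) = dim_col A * dim_col B"
  by (simp_all add: tensor_mat_def)
lemma idx_tensor: "i < dim_row A * dim_row B \<Longrightarrow> j < dim_col A * dim_col B \<Longrightarrow>
  (A \<otimes>\<^sub>k B) $$ (i,j) = A $$ (i div dim_row B, j div dim_col B) * B $$ (i mod dim_row B, j mod dim_col B)"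
  by (simp add: tensor_mat_def)
lemma dim_adj[simp]: "dim_row (adj A) = dim_col A" "dim_col (adj A) = dim_row A" by (simp_all add: adj_def)
lemma idx_adj: "i < dim_col A \<Longrightarrow> j < dim_row A \<Longrightarrow> adj A $$ (i,j) = cnj (A $$ (j,i))"
  by (simp add: adj_def)

lemma smult_mult_l: assumes "dim_col A = dim_row B" shows "(c \<cdot>\<^sub>m A) * B = c \<cdot>\<^sub>m (A * (B::complex mat))"
proof (rule eq_matI)
  fix i j assume i: "i < dim_row (c \<cdot>\<^sub>m (A * B))" and j: "j < dim_col (c \<cdot>\<^sub>m (A * B))"
  have "((c \<cdot>\<^sub>m A) * B) $$ (i, j) = (\<Sum>k\<in>{0..<dim_row B}. (c * A $$ (i,k)) * B $$ (k, j))"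
    using i j assms by (auto simp: scalar_prod_def intro!: sum.cong)
  also have "\<dots> = c * (\<Sum>k\<in>{0..<dim_row B}. A $$ (i,k) * B $$ (k, j))"
    by (simp add: sum_distrib_left ac_simps)
  also have "\<dots> = (c \<cdot>\<^sub>m (A * B)) $$ (i, j)"
    using i j assms by (auto simp: scalar_prod_def intro!: sum.cong)
  finally show "((c \<cdot>\<^sub>m A) * B) $$ (i, j) = (c \<cdot>\<^sub>m (A * B)) $$ (i, j)" .
qed auto
lemma smult_mult_r: assumes "dim_col A = dim_row B" shows "A * (c \<cdot>\<^sub>m B) = c \<cdot>\<^sub>m (A * (B::complex mat))"
proof (rule eq_matI)
  fix i j assume i: "i < dim_row (c \<cdot>\<^sub>m (A * B))" and j: "j < dim_col (c \<cdot>\<^sub>m (A * B))"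
  have "(A * (c \<cdot>\<^sub>m B)) $$ (i, j) = (\<Sum>k\<in>{0..<dim_row B}. A $$ (i,k) * (c * B $$ (k, j)))"
    using i j assms by (auto simp: scalar_prod_def intro!: sum.cong)
  also have "\<dots> = c * (\<Sum>k\<in>{0..<dim_row B}. A $$ (i,k) * B $$ (k, j))"
    by (simp add: sum_distrib_left ac_simps)
  also have "\<dots> = (c \<cdot>\<^sub>m (A * B)) $$ (i, j)"
    using i j assms by (auto simp: scalar_prod_def intro!: sum.cong)
  finally show "(A * (c \<cdot>\<^sub>m B)) $$ (i, j) = (c \<cdot>\<^sub>m (A * B)) $$ (i, j)" .
qed auto

lemma dims_pauli[simp]: "dim_row pauliX = 2" "dim_col pauliX = 2" "dim_row pauliZ = 2" "dim_col pauliZ = 2"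
  "dim_row pauliY = 2" "dim_col pauliY = 2" "dim_row pauliI = 2" "dim_col pauliI = 2"
  "dim_row (ketbra a b) = 2" "dim_col (ketbra a b) = 2"
  by (simp_all add: pauliX_def pauliY_def pauliZ_def pauliI_def ketbra_def)
lemma dims_pow[simp]: "dim_row (pauliX ^\<^sub>m n) = 2" "dim_col (pauliX ^\<^sub>m n) = 2"
  "dim_row (pauliZ ^\<^sub>m n) = 2" "dim_col (pauliZ ^\<^sub>m n) = 2"
  by (induct n) auto
lemma adj_smult: "adj (c \<cdot>\<^sub>m A) = cnj c \<cdot>\<^sub>m adj A"
  by (rule eq_matI) (auto simp: adj_def)
lemma tensor_smult_l: "(c \<cdot>\<^sub>m A) \<otimes>\<^sub>k B = c \<cdot>\<^sub>m (A \<otimes>\<^sub>k B)"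
proof (rule eq_matI)
  fix i j assume i: "i < dim_row (c \<cdot>\<^sub>m (A \<otimes>\<^sub>k B))" and j: "j < dim_col (c \<cdot>\<^sub>m (A \<otimes>\<^sub>k B))"
  then have "i div dim_row B < dim_row A" "j div dim_col B < dim_col A"
    by (simp_all add: less_mult_imp_div_less mult.commute)
  then show "((c \<cdot>\<^sub>m A) \<otimes>\<^sub>k B) $$ (i, j) = (c \<cdot>\<^sub>m (A \<otimes>\<^sub>k B)) $$ (i, j)"
    using i j by (simp add: tensor_mat_def)
qed (simp_all add: tensor_mat_def)
lemma smult_smult: "c \<cdot>\<^sub>m (d \<cdot>\<^sub>m A) = (c * d) \<cdot>\<^sub>m (A :: complex mat)"
  by (rule eq_matI) auto

definition s2 :: complex where "s2 = 1 / complex_of_real (sqrt 2)"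
lemma s2_sq: "s2 * cnj s2 = 1/2"
  unfolding s2_def by (simp add: complex_eq_iff power2_eq_square[symmetric] power_divide)
lemma s2_sq': "cnj s2 * s2 = 1/2" using s2_sq by (simp add: mult.commute)
definition phi_int :: "complex mat" where
  "phi_int = mat 4 1 (\<lambda>(i, j). if i = 0 \<or> i = 3 then 1 else 0)"
lemma dims_phi[simp]: "dim_row phi_int = 4" "dim_col phi_int = 1" by (simp_all add: phi_int_def)
lemma phi_plus_s: "phi_plus = s2 \<cdot>\<^sub>m phi_int"
  by (rule eq_matI) (auto simp: phi_plus_def phi_int_def s2_def)
definition Bm :: "nat \<Rightarrow> nat \<Rightarrow> complex mat" where
  "Bm m n = (pauliI \<otimes>\<^sub>k (pauliX ^\<^sub>m m * pauliZ ^\<^sub>m n)) * phi_int"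
lemma dims_Bm[simp]: "dim_row (Bm m n) = 4" "dim_col (Bm m n) = 1" by (simp_all add: Bm_def)
lemma bell_s: "bell m n = s2 \<cdot>\<^sub>m Bm m n"
  by (simp add: bell_def Bm_def phi_plus_s smult_mult_r)

lemma tel_term_s: "\<rho> \<in> carrier_mat 4 4 \<Longrightarrow> \<sigma> \<in> carrier_mat 2 2 \<Longrightarrow> tel_term \<rho> \<sigma> i j = (1/2) \<cdot>\<^sub>m
   (pauliZ ^\<^sub>m j * pauliX ^\<^sub>m i * ((adj (Bm i j) \<otimes>\<^sub>k pauliI) * (\<sigma> \<otimes>\<^sub>k \<rho>) * adj (adj (Bm i j) \<otimes>\<^sub>k pauliI))
     * adj (pauliZ ^\<^sub>m j * pauliX ^\<^sub>m i))"
  by (simp add: tel_term_def Let_def bell_s adj_smult tensor_smult_l smult_mult_l smult_mult_r smult_smult s2_sq s2_sq')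

lemma pows[simp]: "pauliX ^\<^sub>m 0 = 1\<^sub>m 2" "pauliX ^\<^sub>m 1 = pauliX" "pauliZ ^\<^sub>m 0 = 1\<^sub>m 2" "pauliZ ^\<^sub>m 1 = pauliZ"
  by (simp_all add: pauliX_def pauliZ_def)

definition bvi :: "nat \<Rightarrow> nat \<Rightarrow> nat \<Rightarrow> complex" where
  "bvi m n r = (if m = 0 then (if r=0 then 1 else if r=3 then (if n=0 then 1 else -1) else 0)
     else (if r=1 then 1 else if r=2 then (if n=0 then 1 else -1) else 0))"
lemma Bm_eq: assumes "m < 2" "n < 2" shows "Bm m n = mat 4 1 (\<lambda>(r,_). bvi m n r)"
  using assms unfolding less2 apply (elim disjE)
  by (rule eq_matI; auto simp del: index_mult_mat simp: index_mult_mat(2,3) bvi_def Bm_def phi_int_def idx_mult idx_tensor sum_lt4 sum_lt2 pauliI_def pauliX_def pauliZ_def less4)+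

lemma Bm00: "Bm 0 0 = mat 4 1 (\<lambda>(r,_). if r = 0 \<or> r = 3 then 1 else 0)"
  by (rule eq_matI) (auto simp del: index_mult_mat simp: index_mult_mat(2,3) Bm_def phi_int_def idx_mult idx_tensor sum_lt4 sum_lt2 pauliI_def pauliX_def pauliZ_def less4)


lemmas idxs = index_mult_mat(2,3) idx_mult idx_tensor idx_adj sum_lt4 sum_lt2 sum_lt8 Bm_eq bvi_def pauliI_def pauliX_def pauliZ_def pauliY_def ketbra_def

definition tf :: "complex mat \<Rightarrow> nat \<Rightarrow> nat \<Rightarrow> nat \<Rightarrow> nat \<Rightarrow> complex" where
  "tf \<rho> c d x y = (if (c = d) = (x = y) then
     (if x = c then (if c = d then \<rho> $$ (0,0) + \<rho> $$ (3,3) else \<rho> $$ (0,3) + \<rho> $$ (3,0))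
      else (if c = d then \<rho> $$ (1,1) + \<rho> $$ (2,2) else \<rho> $$ (1,2) + \<rho> $$ (2,1))) else 0)"

lemma tele: assumes "\<rho> \<in> carrier_mat 4 4" "c < 2" "d < 2" "x < 2" "y < 2"
  shows "teleport \<rho> (ketbra c d) $$ (x,y) = tf \<rho> c d x y"
  using assms(2-) unfolding less2 apply (elim disjE)
  using assms(1) by (simp del: index_mult_mat add: teleport_def tel_term_s tf_def idxs)+


lemma bc: assumes "X \<in> carrier_mat 4 4"
  shows "bell_coeff X k = (1/2) * (adj (Bm (k div 2) (k mod 2)) * X * Bm (k div 2) (k mod 2)) $$ (0,0)"
  using assms by (simp add: bell_coeff_def bellk_def bell_s adj_smult smult_mult_l smult_mult_r s2_sq s2_sq' smult_smult)

lemma bp: "bell_proj k = (1/2) \<cdot>\<^sub>m (Bm (k div 2) (k mod 2) * adj (Bm (k div 2) (k mod 2)))"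
  by (simp add: bell_proj_def bellk_def bell_s adj_smult smult_mult_l smult_mult_r s2_sq s2_sq' smult_smult)

lemma twirl: assumes X: "X \<in> carrier_mat 4 4"
  shows "bell_twirl X = bell_coeff X 0 \<cdot>\<^sub>m bell_proj 0 + bell_coeff X 1 \<cdot>\<^sub>m bell_proj 1
     + bell_coeff X 2 \<cdot>\<^sub>m bell_proj 2 + bell_coeff X 3 \<cdot>\<^sub>m bell_proj 3"
proof (rule eq_matI)
  fix i j assume "i < dim_row (bell_coeff X 0 \<cdot>\<^sub>m bell_proj 0 + bell_coeff X 1 \<cdot>\<^sub>m bell_proj 1
     + bell_coeff X 2 \<cdot>\<^sub>m bell_proj 2 + bell_coeff X 3 \<cdot>\<^sub>m bell_proj 3)"
    "j < dim_col (bell_coeff X 0 \<cdot>\<^sub>m bell_proj 0 + bell_coeff X 1 \<cdot>\<^sub>m bell_proj 1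
     + bell_coeff X 2 \<cdot>\<^sub>m bell_proj 2 + bell_coeff X 3 \<cdot>\<^sub>m bell_proj 3)"
  then have "i < 4" "j < 4" by (simp_all add: bp)
  then show "bell_twirl X $$ (i, j) = (bell_coeff X 0 \<cdot>\<^sub>m bell_proj 0 + bell_coeff X 1 \<cdot>\<^sub>m bell_proj 1
     + bell_coeff X 2 \<cdot>\<^sub>m bell_proj 2 + bell_coeff X 3 \<cdot>\<^sub>m bell_proj 3) $$ (i, j)"
    unfolding less4 apply (elim disjE)
    using X by (simp del: index_mult_mat add: bc bp bell_twirl_def pauli_conj2_def idxs algebra_simps)+
qed (use X in \<open>simp_all add: bp bell_twirl_def pauli_conj2_def\<close>)


lemma dims_tele[simp]: "dim_row (teleport \<rho> \<sigma>) = 2" "dim_col (teleport \<rho> \<sigma>) = 2"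
  by (simp_all add: teleport_def tel_term_def Let_def)

lemma idx_kb: "i < 2 \<Longrightarrow> j < 2 \<Longrightarrow> ketbra a b $$ (i,j) = (if i = a \<and> j = b then 1 else 0)"
  by (simp add: ketbra_def)
lemmas idxs2 = index_mult_mat(2,3) idx_mult idx_tensor idx_adj sum_lt4 sum_lt2 sum_lt8 Bm_eq bvi_def idx_kb

lemma swap_car: "swap_state \<rho>1 \<rho>2 \<in> carrier_mat 4 4"
  by (simp add: swap_state_def id_tensor_channel_def)

lemma coeff0: assumes "\<rho>1 \<in> carrier_mat 4 4" "\<rho>2 \<in> carrier_mat 4 4"
  shows "bell_coeff (swap_state \<rho>1 \<rho>2) 0 = bell_coeff \<rho>1 0 * bell_coeff \<rho>2 0 + bell_coeff \<rho>1 1 * bell_coeff \<rho>2 1 + bell_coeff \<rho>1 2 * bell_coeff \<rho>2 2 + bell_coeff \<rho>1 3 * bell_coeff \<rho>2 3"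
  using assms swap_car[of \<rho>1 \<rho>2]
  apply (simp del: index_mult_mat add: bc idxs2)
  apply (simp del: index_mult_mat add: swap_state_def id_tensor_channel_def idxs2 tele tf_def)
  apply (simp add: field_simps)
  done

lemma coeff1: assumes "\<rho>1 \<in> carrier_mat 4 4" "\<rho>2 \<in> carrier_mat 4 4"
  shows "bell_coeff (swap_state \<rho>1 \<rho>2) 1 = bell_coeff \<rho>1 0 * bell_coeff \<rho>2 1 + bell_coeff \<rho>1 1 * bell_coeff \<rho>2 0 + bell_coeff \<rho>1 2 * bell_coeff \<rho>2 3 + bell_coeff \<rho>1 3 * bell_coeff \<rho>2 2"
  using assms swap_car[of \<rho>1 \<rho>2]
  apply (simp del: index_mult_mat add: bc idxs2)
  apply (simp del: index_mult_mat add: swap_state_def id_tensor_channel_def idxs2 tele tf_def)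
  apply (simp add: field_simps)
  done

lemma coeff2: assumes "\<rho>1 \<in> carrier_mat 4 4" "\<rho>2 \<in> carrier_mat 4 4"
  shows "bell_coeff (swap_state \<rho>1 \<rho>2) 2 = bell_coeff \<rho>1 0 * bell_coeff \<rho>2 2 + bell_coeff \<rho>1 2 * bell_coeff \<rho>2 0 + bell_coeff \<rho>1 3 * bell_coeff \<rho>2 1 + bell_coeff \<rho>1 1 * bell_coeff \<rho>2 3"
  using assms swap_car[of \<rho>1 \<rho>2]
  apply (simp del: index_mult_mat add: bc idxs2)
  apply (simp del: index_mult_mat add: swap_state_def id_tensor_channel_def idxs2 tele tf_def)
  apply (simp add: field_simps)
  done

lemma coeff3: assumes "\<rho>1 \<in> carrier_mat 4 4" "\<rho>2 \<in> carrier_mat 4 4"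
  shows "bell_coeff (swap_state \<rho>1 \<rho>2) 3 = bell_coeff \<rho>1 0 * bell_coeff \<rho>2 3 + bell_coeff \<rho>1 3 * bell_coeff \<rho>2 0 + bell_coeff \<rho>1 1 * bell_coeff \<rho>2 2 + bell_coeff \<rho>1 2 * bell_coeff \<rho>2 1"
  using assms swap_car[of \<rho>1 \<rho>2]
  apply (simp del: index_mult_mat add: bc idxs2)
  apply (simp del: index_mult_mat add: swap_state_def id_tensor_channel_def idxs2 tele tf_def)
  apply (simp add: field_simps)
  done

theorem corollary2:
  fixes \<rho>1 \<rho>2 :: "complex mat"
  assumes "density_mat 4 \<rho>1" and "density_mat 4 \<rho>2"
  defines "l \<equiv> bell_coeff \<rho>1" and "m \<equiv> bell_coeff \<rho>2"
  shows "bell_twirl (swap_state \<rho>1 \<rho>2) =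
      (l 0 * m 0 + l 1 * m 1 + l 2 * m 2 + l 3 * m 3) \<cdot>\<^sub>m bell_proj 0
    + (l 0 * m 1 + l 1 * m 0 + l 2 * m 3 + l 3 * m 2) \<cdot>\<^sub>m bell_proj 1
    + (l 0 * m 2 + l 2 * m 0 + l 3 * m 1 + l 1 * m 3) \<cdot>\<^sub>m bell_proj 2
    + (l 0 * m 3 + l 3 * m 0 + l 1 * m 2 + l 2 * m 1) \<cdot>\<^sub>m bell_proj 3"
proof -
  have c1: "\<rho>1 \<in> carrier_mat 4 4" and c2: "\<rho>2 \<in> carrier_mat 4 4"
    using assms(1,2) by (simp_all add: density_mat_def)
  show ?thesis
    unfolding twirl[OF swap_car] coeff0[OF c1 c2] coeff1[OF c1 c2] coeff2[OF c1 c2] coeff3[OF c1 c2] l_def m_def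
    by (rule refl)
qed

end
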